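(* Let $n\ge1$ and suppose $d^\nabla_1=\nabla,d^\nabla_2,\dots,d^\nabla_n$ solve the equations $(A_k)$ for all $k\le n$. Then the equation $(A_{n+1})$ is compatible, i.e. $\big[\delta,\ \tfrac12\sum_{1\le k\le n}[d^\nabla_k,d^\nabla_{n+1-k}]\big]=0$.
   Context: $M$ smooth manifold, $\nabla$ torsion-free (Levi-Civita) connection on $T_M$. $C^*(\mathfrak h)=\Omega_M\otimes_{C^\infty_M}\Gamma(\widehat{\mathrm{Sym}}(T_M^\vee))$, locally with coordinates $x^i$, $y_i=\partial/\partial x^i$, dual frame $y^i$ (degree 0). $\delta=dx^i\partial/\partial y^i$; $d^\nabla_1=\nabla$ acts as the induced covariant derivative; for $k\ge2$, $d^\nabla_k$ is an $\Omega_M$-linear derivation with $d^\nabla_k(y^i)\in\Omega^1_M\otimes\Gamma(\mathrm{Sym}^kT_M^\vee)$; $[\cdot,\cdot]$ is the graded commutator of derivations. Equations: $(A_1)$: $-[\delta,d^\nabla_1]=0$; for $m\ge2$, $(A_m)$: $-[\delta,d^\nabla_m]=\frac12\sum_{1\le k\le m-1}[d^\nabla_k,d^\nabla_{m-k}]$. Equation $(A_m)$ is called compatible if its right-hand side graded-commutes with $\delta$. *)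

theory Defs
  imports "HOL-Analysis.Analysis"
begin

text \<open>Abstract algebraic model: C*(h) is a real vector space 'v, graded by the
  (form-)degree via subspaces V p; the operators delta and d k (k >= 1) are linear
  endomorphisms of degree 1.  gbr p q f g is the graded commutator of homogeneous
  operators f, g of degrees p, q.\<close>

definition gbr :: "int \<Rightarrow> int \<Rightarrow> ('v::real_vector \<Rightarrow> 'v) \<Rightarrow> ('v \<Rightarrow> 'v) \<Rightarrow> ('v \<Rightarrow> 'v)" where
  "gbr p q f g = (\<lambda>x. f (g x) - (if even (p * q) then 1 else -1) *\<^sub>R g (f x))"

definition homog :: "(int \<Rightarrow> 'v::real_vector set) \<Rightarrow> int \<Rightarrow> ('v \<Rightarrow> 'v) \<Rightarrow> bool" where
  "homog V p f \<longleftrightarrow> (\<forall>q. \<forall>x\<in>V q. f x \<in> V (q + p))"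

definition rhsA :: "(nat \<Rightarrow> 'v::real_vector \<Rightarrow> 'v) \<Rightarrow> nat \<Rightarrow> ('v \<Rightarrow> 'v)" where
  "rhsA d m = (\<lambda>x. (1/2) *\<^sub>R (\<Sum>k = 1..m - 1. gbr 1 1 (d k) (d (m - k)) x))"

definition solvesA :: "('v::real_vector \<Rightarrow> 'v) \<Rightarrow> (nat \<Rightarrow> 'v \<Rightarrow> 'v) \<Rightarrow> nat \<Rightarrow> bool" where
  "solvesA delta d m \<longleftrightarrow>
     (if m = 1 then (\<forall>x. - gbr 1 1 delta (d 1) x = 0)
      else (\<forall>x. - gbr 1 1 delta (d m) x = rhsA d m x))"

text \<open>(A_m) is compatible: its right-hand side (degree 2) graded-commutes with delta.\<close>
definition compatibleA :: "('v::real_vector \<Rightarrow> 'v) \<Rightarrow> (nat \<Rightarrow> 'v \<Rightarrow> 'v) \<Rightarrow> nat \<Rightarrow> bool" where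
  "compatibleA delta d m \<longleftrightarrow> (\<forall>x. gbr 1 2 delta (rhsA d m) x = 0)"

end

theory Submission
  imports Defs
begin

lemma triple_sum:
  fixes F :: "nat \<Rightarrow> nat \<Rightarrow> nat \<Rightarrow> 'a::comm_monoid_add"
  shows "(\<Sum>k=1..n. \<Sum>a=1..n-k. F k a (n+1-k-a)) = (\<Sum>k=1..n. \<Sum>a=1..k-1. F a (k-a) (n+1-k))"
proof -
  have L: "(\<Sum>k=1..n. \<Sum>a=1..n-k. F k a (n+1-k-a)) = (\<Sum>(k,a)\<in>Sigma {1..n} (\<lambda>k. {1..n-k}). F k a (n+1-k-a))"
    by (rule sum.Sigma) auto
  have R: "(\<Sum>k=1..n. \<Sum>a=1..k-1. F a (k-a) (n+1-k)) = (\<Sum>(k,a)\<in>Sigma {1..n} (\<lambda>k. {1..k-1}). F a (k-a) (n+1-k))"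
    by (rule sum.Sigma) auto
  have M: "(\<Sum>(k,a)\<in>Sigma {1..n} (\<lambda>k. {1..n-k}). F k a (n+1-k-a)) = (\<Sum>(k,a)\<in>Sigma {1..n} (\<lambda>k. {1..k-1}). F a (k-a) (n+1-k))"
    by (rule sum.reindex_bij_witness[where i="\<lambda>(k,a). (a, k-a)" and j="\<lambda>(k,a). (k+a, k)"]) auto
  show ?thesis using L M R by simp
qed

lemma rhsA_simp:
  "rhsA d m x = (\<Sum>k=1..m-1. d k (d (m-k) x))"
proof -
  have "(\<Sum>k=1..m-1. d (m-k) (d k x)) = (\<Sum>k=1..m-1. d k (d (m-k) x))"
    by (rule sum.reindex_bij_witness[where i="\<lambda>k. m-k" and j="\<lambda>k. m-k"]) auto
  then show ?thesis
    unfolding rhsA_def gbr_def by (simp add: sum.distrib scaleR_2[symmetric] del: scaleR_2)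
qed

theorem lemmaA1:
  fixes V :: "int \<Rightarrow> 'v::real_vector set"
    and delta :: "'v \<Rightarrow> 'v"
    and d :: "nat \<Rightarrow> 'v \<Rightarrow> 'v"
    and n :: nat
  assumes "n \<ge> 1"
    and "\<And>p. subspace (V p)"
    and "linear delta" and "homog V 1 delta"
    and "\<And>k. 1 \<le> k \<Longrightarrow> linear (d k)"
    and "\<And>k. 1 \<le> k \<Longrightarrow> homog V 1 (d k)"
    and "\<And>k. 1 \<le> k \<Longrightarrow> k \<le> n \<Longrightarrow> solvesA delta d k"
  shows "compatibleA delta d (n + 1)"
proof -
  define E where "E k y = (\<Sum>a=1..k-1. d a (d (k-a) y))" for k y
  have key: "delta (d k y) = - d k (delta y) - E k y" if "1 \<le> k" "k \<le> n" for k y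
  proof (cases "k = 1")
    case True
    then have "- gbr 1 1 delta (d 1) y = 0" using assms(7)[OF that] unfolding solvesA_def by simp
    then show ?thesis using True unfolding gbr_def E_def by (simp add: algebra_simps)
  next
    case False
    then have "- gbr 1 1 delta (d k) y = rhsA d k y" using assms(7)[OF that] unfolding solvesA_def by simp
    then show ?thesis unfolding gbr_def E_def rhsA_simp by (simp add: algebra_simps)
  qed
  have lin: "\<And>k. 1 \<le> k \<Longrightarrow> linear (d k)" by (rule assms(5))
  show ?thesis unfolding compatibleA_def
  proof
    fix x
    have "delta (rhsA d (n+1) x) = (\<Sum>k=1..n. delta (d k (d (n+1-k) x)))"
      unfolding rhsA_simp by (simp add: linear_sum[OF assms(3)])
    also have "\<dots> = (\<Sum>k=1..n. d k (d (n+1-k) (delta x)) + d k (E (n+1-k) x) - E k (d (n+1-k) x))"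
    proof (rule sum.cong[OF refl])
      fix k assume k: "k \<in> {1..n}"
      have "delta (d k (d (n+1-k) x)) = - d k (delta (d (n+1-k) x)) - E k (d (n+1-k) x)"
        using key k by auto
      also have "delta (d (n+1-k) x) = - d (n+1-k) (delta x) - E (n+1-k) x"
        using key k by auto
      finally have fin: "delta (d k (d (n+1-k) x)) = - d k (- d (n+1-k) (delta x) - E (n+1-k) x) - E k (d (n+1-k) x)" .
      show "delta (d k (d (n+1-k) x)) = d k (d (n+1-k) (delta x)) + d k (E (n+1-k) x) - E k (d (n+1-k) x)"
      proof -
        have "1 \<le> k" using k by auto
        then have lk: "d k (- d (n+1-k) (delta x) - E (n+1-k) x) = - d k (d (n+1-k) (delta x)) - d k (E (n+1-k) x)"
          using linear_diff[OF lin] linear_neg[OF lin] by metis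
        show ?thesis using fin[unfolded lk] by (simp add: algebra_simps)
      qed
    qed
    also have "\<dots> = (\<Sum>k=1..n. d k (d (n+1-k) (delta x))) + ((\<Sum>k=1..n. d k (E (n+1-k) x)) - (\<Sum>k=1..n. E k (d (n+1-k) x)))"
      by (simp add: sum.distrib sum_subtractf)
    also have "(\<Sum>k=1..n. d k (E (n+1-k) x)) = (\<Sum>k=1..n. \<Sum>a=1..n-k. d k (d a (d (n+1-k-a) x)))"
    proof (rule sum.cong[OF refl])
      fix k assume k: "k \<in> {1..n}"
      show "d k (E (n+1-k) x) = (\<Sum>a=1..n-k. d k (d a (d (n+1-k-a) x)))"
        unfolding E_def using k by (simp add: linear_sum[OF lin] diff_diff_add)
    qed
    also have "\<dots> = (\<Sum>k=1..n. \<Sum>a=1..k-1. d a (d (k-a) (d (n+1-k) x)))"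
      by (rule triple_sum)
    also have "\<dots> = (\<Sum>k=1..n. E k (d (n+1-k) x))" unfolding E_def by simp
    finally show "gbr 1 2 delta (rhsA d (n + 1)) x = 0"
      unfolding gbr_def by (simp add: rhsA_simp)
  qed
qed

end
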